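(* $str(Q_2)=6$, $str(Q_3)=11$, $str(Q_4)=21$ and $str(Q_5)=40$.
   Context: $Q_n$ is the $n$-dimensional hypercube (vertex set $\mathbb Z_2^n$, adjacency iff differing in exactly one coordinate), of order $2^n$. For a graph $G$ of order $p$, a numbering is a bijection $f:V(G)\to[1,p]$; $str_f(G)=\max\{f(u)+f(v): uv\in E(G)\}$ and $str(G)=\min_f str_f(G)$. *)

theory Defs
  imports Main
begin

definition numbering :: "'a set \<Rightarrow> ('a \<Rightarrow> nat) \<Rightarrow> bool" where
  "numbering V f \<longleftrightarrow> bij_betw f V {1..card V}"

definition str_f :: "'a set \<Rightarrow> ('a \<Rightarrow> 'a \<Rightarrow> bool) \<Rightarrow> ('a \<Rightarrow> nat) \<Rightarrow> nat" where
  "str_f V E f = Max {f u + f v | u v. u \<in> V \<and> v \<in> V \<and> E u v}"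

definition strength :: "'a set \<Rightarrow> ('a \<Rightarrow> 'a \<Rightarrow> bool) \<Rightarrow> nat" where
  "strength V E = Min {str_f V E f | f. numbering V f}"

definition cube_V :: "nat \<Rightarrow> bool list set" where
  "cube_V n = {xs. length xs = n}"

definition cube_E :: "nat \<Rightarrow> bool list \<Rightarrow> bool list \<Rightarrow> bool" where
  "cube_E n xs ys \<longleftrightarrow> card {i. i < n \<and> xs ! i \<noteq> ys ! i} = 1"

end

theory Submission
  imports Defs
begin

definition flip :: "bool list \<Rightarrow> nat \<Rightarrow> bool list" where
  "flip x i = x[i := \<not> x ! i]"

definition Dn :: "nat \<Rightarrow> bool list \<Rightarrow> bool list \<Rightarrow> nat set" where
  "Dn n x y = {i. i < n \<and> x ! i \<noteq> y ! i}"

definition Nb :: "nat \<Rightarrow> bool list \<Rightarrow> bool list set" where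
  "Nb n x = {y \<in> cube_V n. cube_E n x y}"

lemma Dn_finite: "finite (Dn n x y)"
  unfolding Dn_def by auto

lemma cubeE_Dn: "cube_E n x y \<longleftrightarrow> card (Dn n x y) = 1"
  unfolding cube_E_def Dn_def by simp

lemma flip_nth: "i < length x \<Longrightarrow> flip x i ! k = (if k = i then \<not> x ! i else x ! k)"
  unfolding flip_def by auto

lemma flip_len[simp]: "length (flip x i) = length x"
  unfolding flip_def by simp

lemma Dn_flip: "length x = n \<Longrightarrow> length y = n \<Longrightarrow> m < n \<Longrightarrow>
   Dn n y (flip x m) = (Dn n x y - {m}) \<union> ({m} - Dn n x y)"
  unfolding Dn_def by (auto simp: flip_nth)

lemma Dn_sym: "Dn n x y = Dn n y x" unfolding Dn_def by auto

lemma Dn_self_flip: "length x = n \<Longrightarrow> m < n \<Longrightarrow> Dn n x (flip x m) = {m}"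
  unfolding Dn_def by (auto simp: flip_nth)

lemma Dn_empty: "length x = n \<Longrightarrow> length y = n \<Longrightarrow> Dn n x y = {} \<Longrightarrow> x = y"
  unfolding Dn_def by (auto intro: nth_equalityI)

lemma Dn_tri: "length x = n \<Longrightarrow> length y = n \<Longrightarrow> length z = n \<Longrightarrow>
   Dn n y z = (Dn n x y - Dn n x z) \<union> (Dn n x z - Dn n x y)"
  unfolding Dn_def by auto

lemma nb_flip: assumes "x \<in> cube_V n" "y \<in> Nb n x" shows "\<exists>i<n. y = flip x i"
proof -
  have ly: "length y = n" "length x = n" using assms by (auto simp: Nb_def cube_V_def)
  have "card (Dn n x y) = 1" using assms by (simp add: Nb_def cubeE_Dn)
  then obtain i where i: "Dn n x y = {i}" by (auto simp: card_Suc_eq)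
  hence "i < n" unfolding Dn_def by auto
  have "y = flip x i"
  proof (rule nth_equalityI)
    show "length y = length (flip x i)" using ly by simp
    fix k assume "k < length y"
    thus "y ! k = flip x i ! k" using i ly \<open>i<n\<close> unfolding Dn_def
      by (auto simp: flip_nth set_eq_iff)
  qed
  thus ?thesis using \<open>i<n\<close> by blast
qed

lemma Nb_eq: assumes "x \<in> cube_V n" shows "Nb n x = flip x ` {..<n}"
proof
  show "Nb n x \<subseteq> flip x ` {..<n}" using nb_flip[OF assms] by blast
  show "flip x ` {..<n} \<subseteq> Nb n x"
  proof
    fix y assume "y \<in> flip x ` {..<n}"
    then obtain i where "i < n" "y = flip x i" by auto
    thus "y \<in> Nb n x" using assms Dn_self_flip[of x n i]
      by (simp add: Nb_def cube_V_def cubeE_Dn)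
  qed
qed

lemma card_Nb: assumes "x \<in> cube_V n" shows "card (Nb n x) = n"
proof -
  have lx: "length x = n" using assms by (simp add: cube_V_def)
  have "inj_on (flip x) {..<n}"
  proof (rule inj_onI)
    fix i j assume "i \<in> {..<n}" "j \<in> {..<n}" "flip x i = flip x j"
    hence "flip x i ! i = flip x j ! i" by simp
    thus "i = j" using \<open>i \<in> {..<n}\<close> \<open>j \<in> {..<n}\<close> lx by (auto simp: flip_nth split: if_splits)
  qed
  thus ?thesis using Nb_eq[OF assms] by (simp add: card_image)
qed

lemma finite_Nb: "x \<in> cube_V n \<Longrightarrow> finite (Nb n x)"
  using Nb_eq by simp

lemma common: assumes "x \<in> cube_V n" "y \<in> cube_V n" "x \<noteq> y" "w \<in> Nb n x" "w \<in> Nb n y"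
  shows "\<exists>i j. i \<noteq> j \<and> Dn n x y = {i, j} \<and> w = flip x i"
proof -
  obtain i where i: "i < n" "w = flip x i" using nb_flip assms by blast
  obtain j where j: "j < n" "w = flip y j" using nb_flip assms by blast
  have lx: "length x = n" "length y = n" using assms by (auto simp: cube_V_def)
  have ij: "i \<noteq> j"
  proof
    assume "i = j"
    have "x = y"
    proof (rule nth_equalityI)
      show "length x = length y" using lx by simp
      fix k assume "k < length x"
      have "flip x i ! k = flip y j ! k" using i j by simp
      thus "x ! k = y ! k" using \<open>i = j\<close> i j lx \<open>k < length x\<close> by (auto simp: flip_nth split: if_splits)
    qed
    thus False using assms by simp
  qed
  have "Dn n x y = {i, j}"
  proof -
    have "\<forall>k<n. (flip x i ! k = flip y j ! k)" using i j by simp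
    thus ?thesis using ij i j lx unfolding Dn_def by (auto simp: flip_nth) (metis)+
  qed
  thus ?thesis using ij i by blast
qed

lemma F2: assumes "x \<in> cube_V n" "y \<in> cube_V n" "x \<noteq> y"
  shows "card (Nb n x \<inter> Nb n y) \<le> 2"
proof (cases "Nb n x \<inter> Nb n y = {}")
  case True thus ?thesis by simp
next
  case False
  then obtain w where "w \<in> Nb n x" "w \<in> Nb n y" by auto
  then obtain i j where ij: "i \<noteq> j" "Dn n x y = {i, j}" using common assms by blast
  have "Nb n x \<inter> Nb n y \<subseteq> flip x ` Dn n x y"
  proof
    fix w' assume "w' \<in> Nb n x \<inter> Nb n y"
    then obtain i' j' where "Dn n x y = {i', j'}" "w' = flip x i'" using common assms by blast
    thus "w' \<in> flip x ` Dn n x y" by auto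
  qed
  hence "card (Nb n x \<inter> Nb n y) \<le> card (flip x ` Dn n x y)"
    by (intro card_mono) (auto simp: Dn_finite)
  also have "\<dots> \<le> card (Dn n x y)" by (rule card_image_le) (simp add: Dn_finite)
  also have "\<dots> = 2" using ij by simp
  finally show ?thesis .
qed

lemma F3: assumes "x \<in> cube_V n" "y \<in> cube_V n" "z \<in> cube_V n" "x \<noteq> y" "x \<noteq> z" "y \<noteq> z"
  "Nb n x \<inter> Nb n y \<noteq> {}" "Nb n x \<inter> Nb n z \<noteq> {}" "Nb n y \<inter> Nb n z \<noteq> {}"
  shows "Nb n x \<inter> Nb n y \<inter> Nb n z \<noteq> {}"
proof -
  have lx: "length x = n" "length y = n" "length z = n" using assms by (auto simp: cube_V_def)
  obtain i j where ij: "i \<noteq> j" "Dn n x y = {i, j}" using common assms(1,2,4,7) by blast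
  obtain k l where kl: "k \<noteq> l" "Dn n x z = {k, l}" using common assms(1,3,5,8) by blast
  obtain p q where pq: "p \<noteq> q" "Dn n y z = {p, q}" using common assms(2,3,6,9) by blast
  have tri: "Dn n y z = (Dn n x y - Dn n x z) \<union> (Dn n x z - Dn n x y)" using Dn_tri lx by blast
  have "Dn n x y \<inter> Dn n x z \<noteq> {}"
  proof
    assume dis: "Dn n x y \<inter> Dn n x z = {}"
    hence "Dn n y z = {i, j, k, l}" using tri ij kl by auto
    moreover have "card {i, j, k, l} = 4" using dis ij kl by auto
    moreover have "card {p, q} \<le> 2" by (simp add: card_insert_if)
    ultimately show False using pq by simp
  qed
  then obtain m where m: "m \<in> Dn n x y" "m \<in> Dn n x z" by auto
  have mn: "m < n" using m unfolding Dn_def by auto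
  let ?w = "flip x m"
  have wV: "?w \<in> cube_V n" using lx by (simp add: cube_V_def)
  have "?w \<in> Nb n x" using wV Dn_self_flip[OF lx(1) mn] by (simp add: Nb_def cubeE_Dn)
  moreover have "?w \<in> Nb n y"
  proof -
    have "Dn n y ?w = Dn n x y - {m}" using Dn_flip[OF lx(1) lx(2) mn] m by auto
    hence "card (Dn n y ?w) = 1" using ij m by auto
    thus ?thesis using wV by (simp add: Nb_def cubeE_Dn)
  qed
  moreover have "?w \<in> Nb n z"
  proof -
    have "Dn n z ?w = Dn n x z - {m}" using Dn_flip[OF lx(1) lx(3) mn] m by auto
    hence "card (Dn n z ?w) = 1" using kl m by auto
    thus ?thesis using wV by (simp add: Nb_def cubeE_Dn)
  qed
  ultimately show ?thesis by blast
qed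


lemma strength_char:
  assumes fin: "finite V" and edge: "u0 \<in> V" "v0 \<in> V" "E u0 v0"
  and wit: "numbering V g" "\<forall>u\<in>V. \<forall>v\<in>V. E u v \<longrightarrow> g u + g v \<le> s"
  and low: "\<And>f. numbering V f \<Longrightarrow> \<exists>u\<in>V. \<exists>v\<in>V. E u v \<and> s \<le> f u + f v"
  shows "strength V E = s"
proof -
  define S where "S f = {f u + f v |u v. u \<in> V \<and> v \<in> V \<and> E u v}" for f :: "'a \<Rightarrow> nat"
  have finS: "finite (S f)" for f
  proof -
    have "S f \<subseteq> (\<lambda>(u,v). f u + f v) ` (V \<times> V)" unfolding S_def by auto
    thus ?thesis using fin finite_subset by blast
  qed
  have neS: "S f \<noteq> {}" for f unfolding S_def using edge by blast
  have strS: "str_f V E f = Max (S f)" for f unfolding str_f_def S_def by simp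
  have ge: "s \<le> str_f V E f" if nf: "numbering V f" for f
  proof -
    obtain u v where "u \<in> V" "v \<in> V" "E u v" "s \<le> f u + f v" using low[OF nf] by blast
    hence "f u + f v \<in> S f" unfolding S_def by blast
    hence "f u + f v \<le> Max (S f)" using finS by (rule Max_ge[rotated])
    thus ?thesis using \<open>s \<le> f u + f v\<close> strS[of f] by linarith
  qed
  have "str_f V E g \<le> s" unfolding strS using finS neS wit(2)
    by (subst Max_le_iff) (auto simp: S_def)
  hence gs: "str_f V E g = s" using ge[OF wit(1)] by simp
  define T where "T = {str_f V E f | f. numbering V f}"
  have "T \<subseteq> {..2 * card V}"
  proof
    fix t assume "t \<in> T"
    then obtain f where f: "numbering V f" "t = str_f V E f" unfolding T_def by blast
    have "t \<in> S f" using f strS Max_in finS neS by metis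
    then obtain u v where "u \<in> V" "v \<in> V" "t = f u + f v" unfolding S_def by blast
    moreover have "f w \<le> card V" if "w \<in> V" for w
      using f(1) that unfolding numbering_def using bij_betw_apply by fastforce
    ultimately have "t \<le> card V + card V" by (metis add_mono)
    thus "t \<in> {..2 * card V}" by simp
  qed
  hence finT: "finite T" using finite_subset by blast
  have "s \<in> T" unfolding T_def using gs wit(1) by force
  moreover have "\<forall>t\<in>T. s \<le> t" unfolding T_def using ge by blast
  ultimately have "Min T = s" using finT by (meson Min_eqI)
  thus ?thesis unfolding strength_def T_def by simp
qed


lemma card_cube: "card (cube_V n) = 2 ^ n"
proof -
  have "cube_V n = {xs. set xs \<subseteq> UNIV \<and> length xs = n}" by (auto simp: cube_V_def)
  thus ?thesis using card_lists_length_eq[of "UNIV :: bool set" n] by (simp add: card_UNIV_bool)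
qed

lemma lab_exists: "numbering V f \<Longrightarrow> k \<in> {1..card V} \<Longrightarrow> \<exists>v\<in>V. f v = k"
  unfolding numbering_def bij_betw_def by (metis imageE)

lemma card_le_lab: assumes "numbering V f" "U \<subseteq> V" "\<forall>u\<in>U. f u \<le> k"
  shows "card U \<le> k"
proof -
  have inj: "inj_on f U" using assms unfolding numbering_def bij_betw_def by (meson inj_on_subset)
  have "f ` U \<subseteq> {1..k}"
  proof
    fix y assume "y \<in> f ` U"
    then obtain u where u: "u \<in> U" "y = f u" by auto
    hence "u \<in> V" using assms(2) by auto
    hence "f u \<in> {1..card V}" using assms(1) unfolding numbering_def by (meson bij_betw_apply)
    thus "y \<in> {1..k}" using u assms(3) by auto
  qed
  hence "card (f ` U) \<le> k" using card_mono[of "{1..k}"] by fastforce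
  thus ?thesis using card_image[OF inj] by simp
qed

lemma nb_lab: fixes f :: "bool list \<Rightarrow> nat"
  assumes "\<forall>u\<in>cube_V n. \<forall>v\<in>cube_V n. cube_E n u v \<longrightarrow> f u + f v \<le> t"
  "v \<in> cube_V n" "w \<in> Nb n v" shows "f w \<le> t - f v"
proof -
  have "cube_E n v w" "w \<in> cube_V n" using assms(3) unfolding Nb_def by auto
  hence "f v + f w \<le> t" using assms(1,2) by blast
  thus ?thesis by arith
qed

lemma Nb_sub: "Nb n v \<subseteq> cube_V n" unfolding Nb_def by auto

lemma low_gen: assumes "numbering (cube_V n) f"
  "\<not> (\<exists>u\<in>cube_V n. \<exists>v\<in>cube_V n. cube_E n u v \<and> s \<le> f u + f v)"
  shows "\<forall>u\<in>cube_V n. \<forall>v\<in>cube_V n. cube_E n u v \<longrightarrow> f u + f v \<le> s - 1"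
  using assms(2) by force

lemma low2: assumes nf: "numbering (cube_V n) f" and n: "n \<ge> 1"
  and ed: "\<forall>u\<in>cube_V n. \<forall>v\<in>cube_V n. cube_E n u v \<longrightarrow> f u + f v \<le> 2^n + n - 1"
  shows False
proof -
  obtain a where a: "a \<in> cube_V n" "f a = 2^n" using lab_exists[OF nf, of "2^n"] card_cube by auto
  have "card (Nb n a) \<le> n - 1"
    using card_le_lab[OF nf Nb_sub] nb_lab[OF ed a(1)] a(2) by auto
  thus False using card_Nb[OF a(1)] n by simp
qed

lemma low4: assumes nf: "numbering (cube_V 4) f"
  and ed: "\<forall>u\<in>cube_V 4. \<forall>v\<in>cube_V 4. cube_E 4 u v \<longrightarrow> f u + f v \<le> 20"
  shows False
proof -
  obtain a where a: "a \<in> cube_V 4" "f a = 16" using lab_exists[OF nf, of 16] card_cube[of 4] by (simp add: Bex_def) blast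
  obtain b where b: "b \<in> cube_V 4" "f b = 15" using lab_exists[OF nf, of 15] card_cube[of 4] by (simp add: Bex_def) blast
  have ab: "a \<noteq> b" using a b by auto
  have "\<forall>u\<in>Nb 4 a. f u \<le> 4" using nb_lab[OF ed a(1)] a(2) by auto
  moreover have "\<forall>u\<in>Nb 4 b. f u \<le> 5" using nb_lab[OF ed b(1)] b(2) by auto
  ultimately have "\<forall>u\<in>Nb 4 a \<union> Nb 4 b. f u \<le> 5" by auto
  moreover have "Nb 4 a \<union> Nb 4 b \<subseteq> cube_V 4" using Nb_sub by blast
  ultimately have "card (Nb 4 a \<union> Nb 4 b) \<le> 5" using card_le_lab[OF nf] by blast
  moreover have "card (Nb 4 a) + card (Nb 4 b) = card (Nb 4 a \<union> Nb 4 b) + card (Nb 4 a \<inter> Nb 4 b)"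
    by (rule card_Un_Int[OF finite_Nb[OF a(1)] finite_Nb[OF b(1)]])
  moreover have "card (Nb 4 a \<inter> Nb 4 b) \<le> 2" by (rule F2[OF a(1) b(1) ab])
  moreover have "card (Nb 4 a) = 4" "card (Nb 4 b) = 4" using card_Nb a(1) b(1) by blast+
  ultimately show False by linarith
qed

lemma low5: assumes nf: "numbering (cube_V 5) f"
  and ed: "\<forall>u\<in>cube_V 5. \<forall>v\<in>cube_V 5. cube_E 5 u v \<longrightarrow> f u + f v \<le> 39"
  shows False
proof -
  obtain a where a: "a \<in> cube_V 5" "f a = 32" using lab_exists[OF nf, of 32] card_cube[of 5] by (simp add: Bex_def) blast
  obtain b where b: "b \<in> cube_V 5" "f b = 31" using lab_exists[OF nf, of 31] card_cube[of 5] by (simp add: Bex_def) blast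
  obtain c where c: "c \<in> cube_V 5" "f c = 30" using lab_exists[OF nf, of 30] card_cube[of 5] by (simp add: Bex_def) blast
  have d: "a \<noteq> b" "a \<noteq> c" "b \<noteq> c" using a b c by auto
  define A where "A = Nb 5 a"
  define B where "B = Nb 5 b"
  define C where "C = Nb 5 c"
  have fin: "finite A" "finite B" "finite C" unfolding A_def B_def C_def
    using finite_Nb[OF a(1)] finite_Nb[OF b(1)] finite_Nb[OF c(1)] by blast+
  have cards: "card A = 5" "card B = 5" "card C = 5" unfolding A_def B_def C_def
    using card_Nb[OF a(1)] card_Nb[OF b(1)] card_Nb[OF c(1)] by blast+
  have la: "\<forall>u\<in>A. f u \<le> 7" using nb_lab[OF ed a(1)] a(2) unfolding A_def by auto
  have lb: "\<forall>u\<in>B. f u \<le> 8" using nb_lab[OF ed b(1)] b(2) unfolding B_def by auto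
  have lc: "\<forall>u\<in>C. f u \<le> 9" using nb_lab[OF ed c(1)] c(2) unfolding C_def by auto
  have sub: "A \<subseteq> cube_V 5" "B \<subseteq> cube_V 5" "C \<subseteq> cube_V 5" using Nb_sub unfolding A_def B_def C_def by auto
  have "\<forall>u\<in>A \<union> B. f u \<le> 8" using la lb by auto
  moreover have "A \<union> B \<subseteq> cube_V 5" using sub by blast
  ultimately have u1: "card (A \<union> B) \<le> 8" using card_le_lab[OF nf] by blast
  have "\<forall>u\<in>A \<union> B \<union> C. f u \<le> 9" using la lb lc by auto
  moreover have "A \<union> B \<union> C \<subseteq> cube_V 5" using sub by blast
  ultimately have u2: "card (A \<union> B \<union> C) \<le> 9" using card_le_lab[OF nf] by blast
  have i1: "card (A \<inter> B) \<le> 2" "card (A \<inter> C) \<le> 2" "card (B \<inter> C) \<le> 2"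
    unfolding A_def B_def C_def
    by (rule F2[OF a(1) b(1) d(1)], rule F2[OF a(1) c(1) d(2)], rule F2[OF b(1) c(1) d(3)])
  have e1: "card A + card B = card (A \<union> B) + card (A \<inter> B)" by (rule card_Un_Int[OF fin(1,2)])
  hence AB: "card (A \<union> B) = 8" "card (A \<inter> B) = 2" using u1 i1 cards by auto
  have e2: "card (A \<union> B) + card C = card (A \<union> B \<union> C) + card ((A \<union> B) \<inter> C)"
    by (rule card_Un_Int) (use fin in auto)
  hence big: "card ((A \<union> B) \<inter> C) \<ge> 4" using AB u2 cards by simp
  have split: "(A \<union> B) \<inter> C = (A \<inter> C) \<union> (B \<inter> C)" by auto
  have e3: "card (A \<inter> C) + card (B \<inter> C) = card ((A \<inter> C) \<union> (B \<inter> C)) + card ((A \<inter> C) \<inter> (B \<inter> C))"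
    by (rule card_Un_Int) (use fin in auto)
  have "card ((A \<inter> C) \<union> (B \<inter> C)) \<le> card (A \<inter> C) + card (B \<inter> C)" by (rule card_Un_le)
  moreover have "4 \<le> card ((A \<inter> C) \<union> (B \<inter> C))" using big split by simp
  ultimately have c2: "card (A \<inter> C) \<ge> 2" "card (B \<inter> C) \<ge> 2" using i1 by linarith+
  have ne: "A \<inter> C \<noteq> {}" "B \<inter> C \<noteq> {}" "A \<inter> B \<noteq> {}"
    using c2 AB(2) by (auto intro!: notI)
  have "A \<inter> B \<inter> C \<noteq> {}" using F3[OF a(1) b(1) c(1) d] ne unfolding A_def B_def C_def by blast
  hence "(A \<inter> C) \<inter> (B \<inter> C) \<noteq> {}" by blast
  moreover have "finite ((A \<inter> C) \<inter> (B \<inter> C))" using fin by blast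
  ultimately have "card ((A \<inter> C) \<inter> (B \<inter> C)) \<ge> 1" using card_gt_0_iff by (metis One_nat_def Suc_leI)
  moreover have "4 \<le> card ((A \<inter> C) \<union> (B \<inter> C))" using big split by simp
  ultimately show False using e3 i1 by linarith
qed


fun enum :: "nat \<Rightarrow> bool list list" where
  "enum 0 = [[]]"
| "enum (Suc n) = concat (map (\<lambda>xs. [False # xs, True # xs]) (enum n))"

lemma set_enum: "set (enum n) = cube_V n"
proof (induction n)
  case 0 thus ?case by (auto simp: cube_V_def)
next
  case (Suc n)
  show ?case
  proof
    show "set (enum (Suc n)) \<subseteq> cube_V (Suc n)" using Suc by (auto simp: cube_V_def)
    show "cube_V (Suc n) \<subseteq> set (enum (Suc n))"
    proof
      fix x assume "x \<in> cube_V (Suc n)"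
      then obtain b ys where x: "x = b # ys" "length ys = n" by (auto simp: cube_V_def length_Suc_conv)
      hence "ys \<in> set (enum n)" using Suc by (simp add: cube_V_def)
      thus "x \<in> set (enum (Suc n))" using x by (cases b) auto
    qed
  qed
qed

fun bin :: "bool list \<Rightarrow> nat" where
  "bin [] = 0"
| "bin (b # bs) = (if b then 1 else 0) + 2 * bin bs"

lemma witness:
  fixes g :: "bool list \<Rightarrow> nat"
  assumes srt: "sort (map g (enum n)) = [1..<Suc (2^n)]"
  and chk: "list_all (\<lambda>x. list_all (\<lambda>i. g x + g (flip x i) \<le> s) [0..<n]) (enum n)"
  shows "numbering (cube_V n) g" "\<forall>u\<in>cube_V n. \<forall>v\<in>cube_V n. cube_E n u v \<longrightarrow> g u + g v \<le> s"
proof -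
  have "distinct (map g (enum n))" using srt by (metis distinct_sort distinct_upt)
  hence inj: "inj_on g (cube_V n)" using set_enum by (simp add: distinct_map)
  have "g ` cube_V n = set (sort (map g (enum n)))" using set_enum by simp
  also have "\<dots> = {1..2^n}" using srt by auto
  finally show "numbering (cube_V n) g" unfolding numbering_def card_cube bij_betw_def using inj by simp
  show "\<forall>u\<in>cube_V n. \<forall>v\<in>cube_V n. cube_E n u v \<longrightarrow> g u + g v \<le> s"
  proof (intro ballI impI)
    fix u v assume uv: "u \<in> cube_V n" "v \<in> cube_V n" "cube_E n u v"
    hence "v \<in> Nb n u" by (simp add: Nb_def)
    then obtain i where "i < n" "v = flip u i" using nb_flip uv(1) by blast
    thus "g u + g v \<le> s" using chk uv(1) set_enum by (auto simp: list_all_iff)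
  qed
qed

definition g2 :: "bool list \<Rightarrow> nat" where "g2 xs = [1, 4, 3, 2] ! bin xs"
definition g3 :: "bool list \<Rightarrow> nat" where "g3 xs = [8, 2, 1, 7, 3, 5, 6, 4] ! bin xs"
definition g4 :: "bool list \<Rightarrow> nat" where
  "g4 xs = [1, 15, 16, 3, 13, 6, 4, 14, 11, 2, 5, 9, 8, 12, 10, 7] ! bin xs"
definition g5 :: "bool list \<Rightarrow> nat" where
  "g5 xs = [27, 6, 11, 29, 10, 30, 28, 8, 12, 25, 26, 2, 23, 7, 9, 31, 13, 22, 24, 4, 20, 5, 3, 32, 18, 15, 14, 21, 16, 19, 17, 1] ! bin xs"

lemma w5: "sort (map g5 (enum 5)) = [1..<Suc (2^5)]"
  by (simp add: g5_def numeral_eq_Suc upt_rec)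

lemma c5: "list_all (\<lambda>x. list_all (\<lambda>i. g5 x + g5 (flip x i) \<le> 40) [0..<5]) (enum 5)"
  by (simp add: g5_def flip_def numeral_eq_Suc upt_rec)


lemma w2: "sort (map g2 (enum 2)) = [1..<Suc (2^2)]"
  by (simp add: g2_def numeral_eq_Suc upt_rec)
lemma c2: "list_all (\<lambda>x. list_all (\<lambda>i. g2 x + g2 (flip x i) \<le> 6) [0..<2]) (enum 2)"
  by (simp add: g2_def flip_def numeral_eq_Suc upt_rec)
lemma w3: "sort (map g3 (enum 3)) = [1..<Suc (2^3)]"
  by (simp add: g3_def numeral_eq_Suc upt_rec)
lemma c3: "list_all (\<lambda>x. list_all (\<lambda>i. g3 x + g3 (flip x i) \<le> 11) [0..<3]) (enum 3)"
  by (simp add: g3_def flip_def numeral_eq_Suc upt_rec)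
lemma w4: "sort (map g4 (enum 4)) = [1..<Suc (2^4)]"
  by (simp add: g4_def numeral_eq_Suc upt_rec)
lemma c4: "list_all (\<lambda>x. list_all (\<lambda>i. g4 x + g4 (flip x i) \<le> 21) [0..<4]) (enum 4)"
  by (simp add: g4_def flip_def numeral_eq_Suc upt_rec)

lemma edge_ex: assumes "n \<ge> 1"
  shows "replicate n False \<in> cube_V n" "flip (replicate n False) 0 \<in> cube_V n"
    "cube_E n (replicate n False) (flip (replicate n False) 0)"
proof -
  show "replicate n False \<in> cube_V n" by (simp add: cube_V_def)
  thus "flip (replicate n False) 0 \<in> cube_V n" by (simp add: cube_V_def)
  show "cube_E n (replicate n False) (flip (replicate n False) 0)"
    using Dn_self_flip[of "replicate n False" n 0] assms by (simp add: cubeE_Dn)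
qed

lemma fin_cube: "finite (cube_V n)"
  using card_cube[of n] by (metis card.infinite power_not_zero zero_neq_numeral)

lemma str2: "strength (cube_V 2) (cube_E 2) = 6"
proof (rule strength_char[OF fin_cube edge_ex witness[OF w2 c2]])
  fix f assume nf: "numbering (cube_V 2) f"
  show "\<exists>u\<in>cube_V 2. \<exists>v\<in>cube_V 2. cube_E 2 u v \<and> 6 \<le> f u + f v"
  proof (rule ccontr)
    assume "\<not> ?thesis"
    from low_gen[OF nf this] have "\<forall>u\<in>cube_V 2. \<forall>v\<in>cube_V 2. cube_E 2 u v \<longrightarrow> f u + f v \<le> 2^2 + 2 - 1" by simp
    thus False using low2[OF nf] by simp
  qed
qed simp_all

lemma str3: "strength (cube_V 3) (cube_E 3) = 11"
proof (rule strength_char[OF fin_cube edge_ex witness[OF w3 c3]])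
  fix f assume nf: "numbering (cube_V 3) f"
  show "\<exists>u\<in>cube_V 3. \<exists>v\<in>cube_V 3. cube_E 3 u v \<and> 11 \<le> f u + f v"
  proof (rule ccontr)
    assume "\<not> ?thesis"
    from low_gen[OF nf this] have "\<forall>u\<in>cube_V 3. \<forall>v\<in>cube_V 3. cube_E 3 u v \<longrightarrow> f u + f v \<le> 2^3 + 3 - 1" by simp
    thus False using low2[OF nf] by simp
  qed
qed simp_all

lemma str4: "strength (cube_V 4) (cube_E 4) = 21"
proof (rule strength_char[OF fin_cube edge_ex witness[OF w4 c4]])
  fix f assume nf: "numbering (cube_V 4) f"
  show "\<exists>u\<in>cube_V 4. \<exists>v\<in>cube_V 4. cube_E 4 u v \<and> 21 \<le> f u + f v"
  proof (rule ccontr)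
    assume "\<not> ?thesis"
    from low_gen[OF nf this] have "\<forall>u\<in>cube_V 4. \<forall>v\<in>cube_V 4. cube_E 4 u v \<longrightarrow> f u + f v \<le> 20" by simp
    thus False using low4[OF nf] by simp
  qed
qed simp_all

lemma str5: "strength (cube_V 5) (cube_E 5) = 40"
proof (rule strength_char[OF fin_cube edge_ex witness[OF w5 c5]])
  fix f assume nf: "numbering (cube_V 5) f"
  show "\<exists>u\<in>cube_V 5. \<exists>v\<in>cube_V 5. cube_E 5 u v \<and> 40 \<le> f u + f v"
  proof (rule ccontr)
    assume "\<not> ?thesis"
    from low_gen[OF nf this] have "\<forall>u\<in>cube_V 5. \<forall>v\<in>cube_V 5. cube_E 5 u v \<longrightarrow> f u + f v \<le> 39" by simp
    thus False using low5[OF nf] by simp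
  qed
qed simp_all

theorem mainTheorem19:
  shows "strength (cube_V 2) (cube_E 2) = 6 \<and> strength (cube_V 3) (cube_E 3) = 11 \<and>
         strength (cube_V 4) (cube_E 4) = 21 \<and> strength (cube_V 5) (cube_E 5) = 40"
  using str2 str3 str4 str5 by blast

end
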